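(* Let $1/n\ll\nu\ll\tau\ll\alpha\ll 1$, and let $G$ be a digraph on $n$ vertices such that $e(G)\geq(\alpha-\nu)n^2$ and $\Delta^0(G)\leq\alpha n$. If $G$ is not a robust $(\nu,\tau)$-outexpander, then $G$ admits a $(4,\tau,4\nu)$-partition.
   Context: Hierarchy convention: $x\ll y$ means $x\leq f(y)$ for some implicitly given non-decreasing function $f:(0,1]\to(0,1]$; the statement asserts such functions exist, constants chosen from right to left. $\Delta^0(G)$ is the maximum over all vertices of the maximum of in- and outdegree. For $S\subseteq V(G)$, the robust $\nu$-outneighbourhood is $RN^+_\nu(S)=\{v\in V(G):|N^-(v)\cap S|\geq\nu n\}$; $G$ is a robust $(\nu,\tau)$-outexpander if $|RN^+_\nu(S)|\geq|S|+\nu n$ for all $S\subseteq V(G)$ with $\tau n\leq|S|\leq(1-\tau)n$. A $4$-partition is a family $\{V_{ij}:i,j\in[2]\}$ of pairwise disjoint (possibly empty) sets with union $V(G)$; $V_{i*}=V_{i1}\cup V_{i2}$, $V_{*j}=V_{1j}\cup V_{2j}$. With $E(A,B)$ the set of edges $ab$, $a\in A$, $b\in B$, the bad edges are $E(V_{1*},V_{*2})\cup E(V_{2*},V_{*1})$. A $(4,\tau,\gamma)$-partition is a $4$-partition with at most $\gamma n^2$ bad edges and $|V_{i*}|,|V_{*j}|\geq\tau n$ for all $i,j\in[2]$. *)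

theory Defs
  imports Complex_Main
begin

definition digraph :: "'a set \<Rightarrow> ('a \<times> 'a) set \<Rightarrow> bool" where
  "digraph V E \<longleftrightarrow> finite V \<and> E \<subseteq> V \<times> V \<and> (\<forall>v. (v, v) \<notin> E)"

definition outdeg :: "('a \<times> 'a) set \<Rightarrow> 'a \<Rightarrow> nat" where
  "outdeg E v = card {w. (v, w) \<in> E}"

definition indeg :: "('a \<times> 'a) set \<Rightarrow> 'a \<Rightarrow> nat" where
  "indeg E v = card {u. (u, v) \<in> E}"

definition max_semideg :: "'a set \<Rightarrow> ('a \<times> 'a) set \<Rightarrow> nat" where
  "max_semideg V E = Max (insert 0 ((\<lambda>v. max (indeg E v) (outdeg E v)) ` V))"

definition robust_outnbhd :: "'a set \<Rightarrow> ('a \<times> 'a) set \<Rightarrow> real \<Rightarrow> 'a set \<Rightarrow> 'a set" where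
  "robust_outnbhd V E \<nu> S = {v \<in> V. real (card ({u. (u, v) \<in> E} \<inter> S)) \<ge> \<nu> * real (card V)}"

definition robust_outexpander :: "'a set \<Rightarrow> ('a \<times> 'a) set \<Rightarrow> real \<Rightarrow> real \<Rightarrow> bool" where
  "robust_outexpander V E \<nu> \<tau> \<longleftrightarrow>
     (\<forall>S \<subseteq> V. \<tau> * real (card V) \<le> real (card S) \<and> real (card S) \<le> (1 - \<tau>) * real (card V)
        \<longrightarrow> real (card (robust_outnbhd V E \<nu> S)) \<ge> real (card S) + \<nu> * real (card V))"

definition four_partition :: "'a set \<Rightarrow> (nat \<Rightarrow> nat \<Rightarrow> 'a set) \<Rightarrow> bool" where
  "four_partition V P \<longleftrightarrow>
     (\<forall>i\<in>{1,2}. \<forall>j\<in>{1,2}. \<forall>i'\<in>{1,2}. \<forall>j'\<in>{1,2}. (i, j) \<noteq> (i', j') \<longrightarrow> P i j \<inter> P i' j' = {})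
     \<and> (\<Union>i\<in>{1,2}. \<Union>j\<in>{1,2}. P i j) = V"

definition row :: "(nat \<Rightarrow> nat \<Rightarrow> 'a set) \<Rightarrow> nat \<Rightarrow> 'a set" where
  "row P i = P i 1 \<union> P i 2"

definition col :: "(nat \<Rightarrow> nat \<Rightarrow> 'a set) \<Rightarrow> nat \<Rightarrow> 'a set" where
  "col P j = P 1 j \<union> P 2 j"

definition edges_between :: "('a \<times> 'a) set \<Rightarrow> 'a set \<Rightarrow> 'a set \<Rightarrow> ('a \<times> 'a) set" where
  "edges_between E A B = {(a, b) \<in> E. a \<in> A \<and> b \<in> B}"

definition bad_edges :: "('a \<times> 'a) set \<Rightarrow> (nat \<Rightarrow> nat \<Rightarrow> 'a set) \<Rightarrow> ('a \<times> 'a) set" where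
  "bad_edges E P = edges_between E (row P 1) (col P 2) \<union> edges_between E (row P 2) (col P 1)"

definition four_tau_gamma_partition ::
  "'a set \<Rightarrow> ('a \<times> 'a) set \<Rightarrow> real \<Rightarrow> real \<Rightarrow> (nat \<Rightarrow> nat \<Rightarrow> 'a set) \<Rightarrow> bool" where
  "four_tau_gamma_partition V E \<tau> \<gamma> P \<longleftrightarrow>
     four_partition V P
     \<and> real (card (bad_edges E P)) \<le> \<gamma> * real (card V) ^ 2
     \<and> (\<forall>i\<in>{1,2}. real (card (row P i)) \<ge> \<tau> * real (card V)
                 \<and> real (card (col P i)) \<ge> \<tau> * real (card V))"

definition hier_fun :: "(real \<Rightarrow> real) \<Rightarrow> bool" where
  "hier_fun f \<longleftrightarrow> (\<forall>x\<in>{0<..1}. f x \<in> {0<..1}) \<and> mono_on {0<..1} f"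

end

theory Submission
  imports Defs
begin

lemma eb_out:
  assumes "finite A" "finite B"
  shows "card (edges_between E A B) = (\<Sum>a\<in>A. card ({w. (a, w) \<in> E} \<inter> B))"
proof -
  have "edges_between E A B = (SIGMA a:A. {w. (a, w) \<in> E} \<inter> B)"
    unfolding edges_between_def by auto
  then show ?thesis using assms by simp
qed

lemma eb_in:
  assumes "finite A" "finite B"
  shows "card (edges_between E A B) = (\<Sum>b\<in>B. card ({u. (u, b) \<in> E} \<inter> A))"
proof -
  have eq: "edges_between E A B = (\<lambda>(b, a). (a, b)) ` (SIGMA b:B. {u. (u, b) \<in> E} \<inter> A)"
    unfolding edges_between_def by (auto simp: image_iff)
  have inj: "inj_on (\<lambda>(b, a). (a, b)) (SIGMA b:B. {u. (u, b) \<in> E} \<inter> A)"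
    by (auto simp: inj_on_def)
  show ?thesis unfolding eq card_image[OF inj] using assms by simp
qed

lemma eb_split2:
  assumes "finite E" "C \<subseteq> B"
  shows "card (edges_between E A B) = card (edges_between E A C) + card (edges_between E A (B - C))"
proof -
  have "edges_between E A B = edges_between E A C \<union> edges_between E A (B - C)"
    using assms unfolding edges_between_def by auto
  moreover have "edges_between E A C \<inter> edges_between E A (B - C) = {}"
    unfolding edges_between_def by auto
  moreover have "finite (edges_between E A C)" "finite (edges_between E A (B - C))"
    using assms(1) unfolding edges_between_def by (auto intro: finite_subset)
  ultimately show ?thesis by (simp add: card_Un_disjoint)
qed

lemma eb_split1:
  assumes "finite E" "C \<subseteq> B"
  shows "card (edges_between E B A) = card (edges_between E C A) + card (edges_between E (B - C) A)"
proof -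
  have "edges_between E B A = edges_between E C A \<union> edges_between E (B - C) A"
    using assms unfolding edges_between_def by auto
  moreover have "edges_between E C A \<inter> edges_between E (B - C) A = {}"
    unfolding edges_between_def by auto
  moreover have "finite (edges_between E C A)" "finite (edges_between E (B - C) A)"
    using assms(1) unfolding edges_between_def by (auto intro: finite_subset)
  ultimately show ?thesis by (simp add: card_Un_disjoint)
qed

lemma deg_le:
  assumes "finite V" "v \<in> V"
  shows "indeg E v \<le> max_semideg V E" "outdeg E v \<le> max_semideg V E"
proof -
  have "max (indeg E v) (outdeg E v) \<le> max_semideg V E"
    unfolding max_semideg_def using assms by (intro Max_ge) auto
  then show "indeg E v \<le> max_semideg V E" "outdeg E v \<le> max_semideg V E" by auto
qed


lemma core:
  fixes \<alpha> \<tau> \<nu> :: real and V :: "'a set" and E :: "('a \<times> 'a) set"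
  assumes a2: "\<alpha> \<le> 1/2" and apos: "0 < \<alpha>" and npos: "0 < \<nu>"
    and dg: "digraph V E" and cV: "card V = n"
    and cE: "real (card E) \<ge> (\<alpha> - \<nu>) * real n ^ 2"
    and md: "real (max_semideg V E) \<le> \<alpha> * real n"
    and ne: "\<not> robust_outexpander V E \<nu> \<tau>"
  shows "\<exists>P. four_tau_gamma_partition V E \<tau> (4 * \<nu>) P"
proof -
  have fV: "finite V" and EV: "E \<subseteq> V \<times> V" using dg unfolding digraph_def by auto
  have fE: "finite E" using EV fV by (meson finite_SigmaI finite_subset)
  define D where "D = max_semideg V E"
  obtain S where SV: "S \<subseteq> V" and s1: "\<tau> * real n \<le> real (card S)"
    and s2: "real (card S) \<le> (1 - \<tau>) * real n"
    and rs: "real (card (robust_outnbhd V E \<nu> S)) < real (card S) + \<nu> * real n"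
    using ne unfolding robust_outexpander_def cV by (auto simp: not_le)
  define R where "R = robust_outnbhd V E \<nu> S"
  define s where "s = card S"
  have RV: "R \<subseteq> V" unfolding R_def robust_outnbhd_def by auto
  have fS: "finite S" using SV fV finite_subset by blast
  have sn: "s \<le> n" unfolding s_def using SV fV cV card_mono by blast
  have cnt_out: "real (card ({u. (u, v) \<in> E} \<inter> S)) < \<nu> * real n" if "v \<in> V" "v \<notin> R" for v
    using that unfolding R_def robust_outnbhd_def cV by auto
  have cnt_D: "card ({u. (u, v) \<in> E} \<inter> A) \<le> D" if "v \<in> V" for v A
  proof -
    have "{u. (u, v) \<in> E} \<subseteq> V" using EV by auto
    then have "card ({u. (u, v) \<in> E} \<inter> A) \<le> indeg E v"
      unfolding indeg_def using fV by (intro card_mono) (auto intro: finite_subset)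
    then show ?thesis using deg_le(1)[OF fV that, of E] unfolding D_def by linarith
  qed
  have cnt_Do: "card ({w. (v, w) \<in> E} \<inter> A) \<le> D" if "v \<in> V" for v A
  proof -
    have "{w. (v, w) \<in> E} \<subseteq> V" using EV by auto
    then have "card ({w. (v, w) \<in> E} \<inter> A) \<le> outdeg E v"
      unfolding outdeg_def using fV by (intro card_mono) (auto intro: finite_subset)
    then show ?thesis using deg_le(2)[OF fV that, of E] unfolding D_def by linarith
  qed
  have Dn: "real D \<le> \<alpha> * real n" using md D_def by simp
  obtain C where CV: "C \<subseteq> V" and cC: "card C = s"
    and x1: "real (card (edges_between E S (V - C))) \<le> 3/2 * \<nu> * real n ^ 2"
  proof (cases "card R \<le> s")
    case True
    have "card (V - R) = n - card R" using RV fV cV by (simp add: card_Diff_subset finite_subset)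
    then have "s - card R \<le> card (V - R)" using sn by linarith
    then obtain X where X: "X \<subseteq> V - R" "card X = s - card R" "finite X"
      by (rule obtain_subset_with_card_n)
    define C where "C = R \<union> X"
    have fR: "finite R" using RV fV finite_subset by blast
    have "card C = card R + card X" unfolding C_def using X fR
      by (subst card_Un_disjoint) auto
    then have cC: "card C = s" using X True by simp
    have CV: "C \<subseteq> V" using X RV C_def by auto
    have "real (card (edges_between E S (V - C))) = (\<Sum>v\<in>V - C. real (card ({u. (u, v) \<in> E} \<inter> S)))"
      using eb_in[OF fS, of "V - C" E] fV by simp
    also have "\<dots> \<le> (\<Sum>v\<in>V - C. \<nu> * real n)"
      by (intro sum_mono less_imp_le cnt_out) (auto simp: C_def)
    also have "\<dots> = real (card (V - C)) * (\<nu> * real n)" by simp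
    also have "\<dots> \<le> real n * (\<nu> * real n)"
      using npos by (intro mult_right_mono) (auto simp: cV[symmetric] fV card_mono)
    also have "\<dots> \<le> 3/2 * \<nu> * real n ^ 2" using npos by (simp add: power2_eq_square)
    finally show ?thesis using that CV cC by blast
  next
    case False
    then obtain C where C: "C \<subseteq> R" "card C = s" "finite C"
      by (metis nat_le_linear obtain_subset_with_card_n)
    have CV: "C \<subseteq> V" using C RV by auto
    have fR: "finite R" using RV fV finite_subset by blast
    have VC: "V - C = (V - R) \<union> (R - C)" using C RV by auto
    have "real (card (edges_between E S (V - C))) = (\<Sum>v\<in>V - C. real (card ({u. (u, v) \<in> E} \<inter> S)))"
      using eb_in[OF fS, of "V - C" E] fV by simp
    also have "\<dots> = (\<Sum>v\<in>V - R. real (card ({u. (u, v) \<in> E} \<inter> S))) + (\<Sum>v\<in>R - C. real (card ({u. (u, v) \<in> E} \<inter> S)))"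
      unfolding VC using fV fR by (intro sum.union_disjoint) auto
    also have "\<dots> \<le> (\<Sum>v\<in>V - R. \<nu> * real n) + (\<Sum>v\<in>R - C. real D)"
    proof (intro add_mono sum_mono)
      show "real (card ({u. (u, v) \<in> E} \<inter> S)) \<le> \<nu> * real n" if "v \<in> V - R" for v
        using cnt_out that by (simp add: less_imp_le)
      show "real (card ({u. (u, v) \<in> E} \<inter> S)) \<le> real D" if "v \<in> R - C" for v
        using cnt_D RV that by auto
    qed
    also have "\<dots> = real (card (V - R)) * (\<nu> * real n) + real (card (R - C)) * real D" by simp
    also have "\<dots> \<le> real n * (\<nu> * real n) + (\<nu> * real n) * (\<alpha> * real n)"
    proof (intro add_mono mult_mono)
      show "real (card (V - R)) \<le> real n" using fV cV card_mono by (metis Diff_subset of_nat_mono)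
      have "card (R - C) = card R - s" using C fR by (simp add: card_Diff_subset)
      then show "real (card (R - C)) \<le> \<nu> * real n" using rs False unfolding R_def s_def by auto
    qed (use npos Dn in auto)
    also have "\<dots> \<le> 3/2 * \<nu> * real n ^ 2"
    proof -
      have "(\<nu> * real n) * (\<alpha> * real n) \<le> (\<nu> * real n) * (1/2 * real n)"
        using a2 npos by (intro mult_left_mono mult_right_mono) auto
      then show ?thesis by (simp add: power2_eq_square algebra_simps)
    qed
    finally show ?thesis using that CV C by blast
  qed
  have fC: "finite C" using CV fV finite_subset by blast
  have EVV: "edges_between E V V = E" using EV unfolding edges_between_def by auto
  have e1: "card E = card (edges_between E S V) + card (edges_between E (V - S) V)"
    using eb_split1[OF fE SV, of V] EVV by simp
  have e2: "card (edges_between E S V) = card (edges_between E S C) + card (edges_between E S (V - C))"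
    using eb_split2[OF fE CV] by simp
  have e3: "card (edges_between E V C) = card (edges_between E S C) + card (edges_between E (V - S) C)"
    using eb_split1[OF fE SV] by simp
  have e4: "real (card (edges_between E (V - S) V)) \<le> (real n - real s) * (\<alpha> * real n)"
  proof -
    have "card (edges_between E (V - S) V) = (\<Sum>v\<in>V - S. card ({w. (v, w) \<in> E} \<inter> V))"
      using eb_out fV by blast
    also have "\<dots> \<le> (\<Sum>v\<in>V - S. D)" by (intro sum_mono cnt_Do) auto
    also have "\<dots> = (n - s) * D" using SV fS fV cV s_def by (simp add: card_Diff_subset)
    finally have "real (card (edges_between E (V - S) V)) \<le> real (n - s) * real D"
      by (metis of_nat_le_iff of_nat_mult)
    also have "\<dots> \<le> (real n - real s) * (\<alpha> * real n)"
      using sn Dn by (intro mult_mono) auto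
    finally show ?thesis .
  qed
  have e5: "real (card (edges_between E V C)) \<le> real s * (\<alpha> * real n)"
  proof -
    have "card (edges_between E V C) = (\<Sum>v\<in>C. card ({u. (u, v) \<in> E} \<inter> V))"
      using eb_in fV fC by blast
    also have "\<dots> \<le> (\<Sum>v\<in>C. D)" using CV by (intro sum_mono cnt_D) auto
    also have "\<dots> = s * D" using cC by simp
    finally have "real (card (edges_between E V C)) \<le> real s * real D"
      by (metis of_nat_le_iff of_nat_mult)
    also have "\<dots> \<le> real s * (\<alpha> * real n)"
      using Dn by (intro mult_left_mono) auto
    finally show ?thesis .
  qed
  define P where "P = (\<lambda>i j. (if i = (1::nat) then S else V - S) \<inter> (if j = (1::nat) then C else V - C))"
  have r1: "row P 1 = S" and r2: "row P 2 = V - S" and c1: "col P 1 = C" and c2: "col P 2 = V - C"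
    unfolding row_def col_def P_def using SV CV by auto
  have fp: "four_partition V P"
    unfolding four_partition_def P_def using SV CV by auto
  have bad: "card (bad_edges E P) \<le> card (edges_between E S (V - C)) + card (edges_between E (V - S) C)"
    unfolding bad_edges_def r1 r2 c1 c2 by (rule card_Un_le)
  have alg: "real s * (\<alpha> * real n) + (real n - real s) * (\<alpha> * real n) - (\<alpha> - \<nu>) * real n ^ 2 = \<nu> * real n ^ 2"
    by (simp add: algebra_simps power2_eq_square)
  have badr: "real (card (bad_edges E P)) \<le> 4 * \<nu> * real (card V) ^ 2"
  proof -
    have b': "real (card (bad_edges E P)) \<le> real (card (edges_between E S (V - C))) + real (card (edges_between E (V - S) C))"
      using bad by (metis of_nat_add of_nat_le_iff)
    have e1': "real (card E) = real (card (edges_between E S V)) + real (card (edges_between E (V - S) V))"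
      using e1 by simp
    have e2': "real (card (edges_between E S V)) = real (card (edges_between E S C)) + real (card (edges_between E S (V - C)))"
      using e2 by simp
    have e3': "real (card (edges_between E V C)) = real (card (edges_between E S C)) + real (card (edges_between E (V - S) C))"
      using e3 by simp
    have m1: "3/2 * \<nu> * real n ^ 2 = 3/2 * (\<nu> * real n ^ 2)" by simp
    have "real (card (bad_edges E P)) \<le> 4 * (\<nu> * real n ^ 2)"
      using b' e1' e2' e3' e4 e5 x1 cE alg m1 by linarith
    then show ?thesis using cV by simp
  qed
  have sizes: "\<forall>i\<in>{1,2}. real (card (row P i)) \<ge> \<tau> * real (card V) \<and> real (card (col P i)) \<ge> \<tau> * real (card V)"
  proof -
    have "card (V - S) = n - s" using SV fS cV s_def by (simp add: card_Diff_subset)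
    moreover have "card (V - C) = n - s" using CV fC cV cC by (simp add: card_Diff_subset)
    ultimately show ?thesis using r1 r2 c1 c2 s1 s2 sn cC cV s_def
      by (auto simp: of_nat_diff algebra_simps)
  qed
  show ?thesis unfolding four_tau_gamma_partition_def using fp badr sizes by blast
qed

lemma hier_id: "hier_fun (\<lambda>x. x)"
  unfolding hier_fun_def by (auto simp: mono_on_def)

theorem lemma3p6:
  "\<exists>\<alpha>0 \<in> {0<..1}. \<exists>f\<tau> f\<nu> fn. hier_fun f\<tau> \<and> hier_fun f\<nu> \<and> hier_fun fn \<and>
     (\<forall>(\<alpha>::real) (\<tau>::real) (\<nu>::real) (n::nat) (V::nat set) (E::(nat \<times> nat) set).
        0 < \<alpha> \<and> \<alpha> \<le> \<alpha>0 \<and> 0 < \<tau> \<and> \<tau> \<le> f\<tau> \<alpha> \<and> 0 < \<nu> \<and> \<nu> \<le> f\<nu> \<tau> \<and>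
        0 < n \<and> 1 / real n \<le> fn \<nu> \<and>
        digraph V E \<and> card V = n \<and>
        real (card E) \<ge> (\<alpha> - \<nu>) * real n ^ 2 \<and>
        real (max_semideg V E) \<le> \<alpha> * real n \<and>
        \<not> robust_outexpander V E \<nu> \<tau>
        \<longrightarrow> (\<exists>P. four_tau_gamma_partition V E \<tau> (4 * \<nu>) P))"
proof (intro bexI[of _ "1/2"] exI[of _ "\<lambda>x. x"] conjI hier_id allI impI)
  fix \<alpha> \<tau> \<nu> :: real and n :: nat and V :: "nat set" and E :: "(nat \<times> nat) set"
  assume h: "0 < \<alpha> \<and> \<alpha> \<le> 1/2 \<and> 0 < \<tau> \<and> \<tau> \<le> \<alpha> \<and> 0 < \<nu> \<and> \<nu> \<le> \<tau> \<and>
        0 < n \<and> 1 / real n \<le> \<nu> \<and>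
        digraph V E \<and> card V = n \<and>
        real (card E) \<ge> (\<alpha> - \<nu>) * real n ^ 2 \<and>
        real (max_semideg V E) \<le> \<alpha> * real n \<and>
        \<not> robust_outexpander V E \<nu> \<tau>"
  show "\<exists>P. four_tau_gamma_partition V E \<tau> (4 * \<nu>) P"
    using h by (intro core[of \<alpha> \<nu> V E n \<tau>]) auto
qed auto

end
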